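(* Let $(Y,\preceq,\prec,\to)$ be a normal solid vector space. Then: (C8) each subsequence of a convergent sequence converges to the same limit; (C9) the convergence of a sequence and its limit do not depend on finitely many of its terms; (C10) if $\lambda_n\to\lambda$ in $\mathbb R$ and $x_n\to x$, then $\lambda_nx_n\to\lambda x$; (C11) if $\lambda_n\to0$ in $\mathbb R$ and $(x_n)$ is bounded in $Y$ (there exist $a,b\in Y$ with $a\preceq x_n\preceq b$ for all $n$), then $\lambda_nx_n\to0$; (C12) if $(\lambda_n)$ is a bounded real sequence and $x_n\to0$, then $\lambda_nx_n\to0$; (C13) for every sequence $(x_n)$ in $Y$ and $x\in Y$, $x_n\to x$ if and only if for every $c\succ0$ there exists $N\in\mathbb N$ with $x-c\prec x_n\prec x+c$ for all $n>N$.
   Context: Vector space with convergence: a real vector space $Y$ with a relation $\to$ between sequences in $Y$ and points of $Y$ (uniqueness of limits not assumed) such that (C1) $x_n\to x$, $y_n\to y$ imply $x_n+y_n\to x+y$; (C2) $x_n\to x$, $\lambda\in\mathbb R$ imply $\lambda x_n\to\lambda x$; (C3) $\lambda_n\to\lambda$ in $\mathbb R$ imply $\lambda_n x\to\lambda x$. $A\subseteq Y$ is open if $x_n\to x\in A$ implies $x_n\in A$ for all but finitely many $n$; closed if $x_n\to x$, $x_n\in A$ $\forall n$ imply $x\in A$; $A^\circ$ is the union of all open subsets of $A$. A cone is a nonempty closed $K$ with $\lambda K\subseteq K$ ($\lambda\ge0$), $K+K\subseteq K$, $K\cap(-K)=\{0\}$; solid if $K\ne\{0\}$, $K^\circ\ne\emptyset$.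 A vector ordering is a partial order $\preceq$ with (V1) $x\preceq y\Rightarrow x+z\preceq y+z$; (V2) $\lambda\ge0$, $x\preceq y\Rightarrow\lambda x\preceq\lambda y$; (V3) $x_n\to x$, $y_n\to y$, $x_n\preceq y_n$ $\forall n\Rightarrow x\preceq y$. Solid vector space: positive cone $K=\{x:x\succeq0\}$ solid, with $x\prec y$ iff $y-x\in K^\circ$. Normal: whenever $x_n\preceq y_n\preceq z_n$ for all $n$, $x_n\to x$ and $z_n\to x$, then $y_n\to x$. *)

theory Defs
  imports "HOL-Analysis.Analysis"
begin

text \<open>A convergence on a real vector space is a relation conv between sequences
  and points (uniqueness of limits not assumed).\<close>

definition vsc :: "((nat \<Rightarrow> 'a::real_vector) \<Rightarrow> 'a \<Rightarrow> bool) \<Rightarrow> bool" where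
  "vsc conv \<longleftrightarrow>
     (\<forall>xs ys x y. conv xs x \<longrightarrow> conv ys y \<longrightarrow> conv (\<lambda>n. xs n + ys n) (x + y)) \<and>
     (\<forall>xs x (c::real). conv xs x \<longrightarrow> conv (\<lambda>n. c *\<^sub>R xs n) (c *\<^sub>R x)) \<and>
     (\<forall>(cs::nat \<Rightarrow> real) c x. cs \<longlonglongrightarrow> c \<longrightarrow> conv (\<lambda>n. cs n *\<^sub>R x) (c *\<^sub>R x))"

definition c_open :: "((nat \<Rightarrow> 'a) \<Rightarrow> 'a \<Rightarrow> bool) \<Rightarrow> 'a set \<Rightarrow> bool" where
  "c_open conv A \<longleftrightarrow>
     (\<forall>xs x. conv xs x \<longrightarrow> x \<in> A \<longrightarrow> (\<forall>\<^sub>F n in sequentially. xs n \<in> A))"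

definition c_closed :: "((nat \<Rightarrow> 'a) \<Rightarrow> 'a \<Rightarrow> bool) \<Rightarrow> 'a set \<Rightarrow> bool" where
  "c_closed conv A \<longleftrightarrow> (\<forall>xs x. conv xs x \<longrightarrow> (\<forall>n. xs n \<in> A) \<longrightarrow> x \<in> A)"

definition c_interior :: "((nat \<Rightarrow> 'a) \<Rightarrow> 'a \<Rightarrow> bool) \<Rightarrow> 'a set \<Rightarrow> 'a set" where
  "c_interior conv A = \<Union>{U. U \<subseteq> A \<and> c_open conv U}"

definition c_cone :: "((nat \<Rightarrow> 'a::real_vector) \<Rightarrow> 'a \<Rightarrow> bool) \<Rightarrow> 'a set \<Rightarrow> bool" where
  "c_cone conv K \<longleftrightarrow> K \<noteq> {} \<and> c_closed conv K \<and>
     (\<forall>c::real. \<forall>x\<in>K. c \<ge> 0 \<longrightarrow> c *\<^sub>R x \<in> K) \<and>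
     (\<forall>x\<in>K. \<forall>y\<in>K. x + y \<in> K) \<and> K \<inter> uminus ` K = {0}"

definition c_solid_cone :: "((nat \<Rightarrow> 'a::real_vector) \<Rightarrow> 'a \<Rightarrow> bool) \<Rightarrow> 'a set \<Rightarrow> bool" where
  "c_solid_cone conv K \<longleftrightarrow> c_cone conv K \<and> K \<noteq> {0} \<and> c_interior conv K \<noteq> {}"

definition vector_ordering ::
  "((nat \<Rightarrow> 'a::real_vector) \<Rightarrow> 'a \<Rightarrow> bool) \<Rightarrow> ('a \<Rightarrow> 'a \<Rightarrow> bool) \<Rightarrow> bool" where
  "vector_ordering conv le \<longleftrightarrow>
     (\<forall>x. le x x) \<and> (\<forall>x y. le x y \<longrightarrow> le y x \<longrightarrow> x = y) \<and>
     (\<forall>x y z. le x y \<longrightarrow> le y z \<longrightarrow> le x z) \<and>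
     (\<forall>x y z. le x y \<longrightarrow> le (x + z) (y + z)) \<and>
     (\<forall>(c::real) x y. c \<ge> 0 \<longrightarrow> le x y \<longrightarrow> le (c *\<^sub>R x) (c *\<^sub>R y)) \<and>
     (\<forall>xs ys x y. conv xs x \<longrightarrow> conv ys y \<longrightarrow> (\<forall>n. le (xs n) (ys n)) \<longrightarrow> le x y)"

definition solid_vector_space ::
  "((nat \<Rightarrow> 'a::real_vector) \<Rightarrow> 'a \<Rightarrow> bool) \<Rightarrow> ('a \<Rightarrow> 'a \<Rightarrow> bool) \<Rightarrow> ('a \<Rightarrow> 'a \<Rightarrow> bool) \<Rightarrow> bool" where
  "solid_vector_space conv le lt \<longleftrightarrow>
     vsc conv \<and> vector_ordering conv le \<and> c_solid_cone conv {x. le 0 x} \<and>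
     (\<forall>x y. lt x y \<longleftrightarrow> y - x \<in> c_interior conv {x. le 0 x})"

definition c_normal ::
  "((nat \<Rightarrow> 'a) \<Rightarrow> 'a \<Rightarrow> bool) \<Rightarrow> ('a \<Rightarrow> 'a \<Rightarrow> bool) \<Rightarrow> bool" where
  "c_normal conv le \<longleftrightarrow>
     (\<forall>xs ys zs x. (\<forall>n. le (xs n) (ys n) \<and> le (ys n) (zs n)) \<longrightarrow>
        conv xs x \<longrightarrow> conv zs x \<longrightarrow> conv ys x)"

end

theory Submission
  imports Defs
begin

locale svs =
  fixes conv :: "(nat \<Rightarrow> 'a::real_vector) \<Rightarrow> 'a \<Rightarrow> bool"
    and le lt :: "'a \<Rightarrow> 'a \<Rightarrow> bool"
  assumes S: "solid_vector_space conv le lt"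
    and Nrm: "c_normal conv le"
begin

abbreviation "Ki \<equiv> c_interior conv {x. le 0 x}"

lemma C1: "conv xs x \<Longrightarrow> conv ys y \<Longrightarrow> conv (\<lambda>n. xs n + ys n) (x + y)"
  using S unfolding solid_vector_space_def vsc_def by blast
lemma C2: "conv xs x \<Longrightarrow> conv (\<lambda>n. c *\<^sub>R xs n) (c *\<^sub>R x)"
  using S unfolding solid_vector_space_def vsc_def by blast
lemma C3: "cs \<longlonglongrightarrow> c \<Longrightarrow> conv (\<lambda>n. cs n *\<^sub>R x) (c *\<^sub>R x)"
  using S unfolding solid_vector_space_def vsc_def by blast
lemma Cconst: "conv (\<lambda>n. a) a"
  using C3[of "\<lambda>n. 1" 1 a] by simp
lemma Cdiff: "conv xs x \<Longrightarrow> conv ys y \<Longrightarrow> conv (\<lambda>n. xs n - ys n) (x - y)"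
  using C1[of xs x "\<lambda>n. (-1) *\<^sub>R ys n" "(-1) *\<^sub>R y"] C2[of ys y "-1"] by simp

lemma le_trans: "le x y \<Longrightarrow> le y z \<Longrightarrow> le x z"
  using S unfolding solid_vector_space_def vector_ordering_def by blast
lemma le_add: "le x y \<Longrightarrow> le (x + z) (y + z)"
  using S unfolding solid_vector_space_def vector_ordering_def by blast
lemma le_scale: "c \<ge> 0 \<Longrightarrow> le x y \<Longrightarrow> le (c *\<^sub>R x) (c *\<^sub>R y)"
  using S unfolding solid_vector_space_def vector_ordering_def by blast
lemma lt_iff: "lt x y \<longleftrightarrow> y - x \<in> Ki"
  using S unfolding solid_vector_space_def by blast

lemma le_iff: "le x y \<longleftrightarrow> le 0 (y - x)"
proof
  assume "le x y" then show "le 0 (y - x)" using le_add[of x y "-x"] by simp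
next
  assume "le 0 (y - x)" then show "le x y" using le_add[of 0 "y - x" x] by simp
qed

lemma K_add: "le 0 a \<Longrightarrow> le 0 b \<Longrightarrow> le 0 (a + b)"
  using le_add[of 0 a b] le_trans[of 0 b "a + b"] by simp

lemma K_scale: "c \<ge> 0 \<Longrightarrow> le 0 a \<Longrightarrow> le 0 (c *\<^sub>R a)"
  using le_scale[of c 0 a] by simp

lemma le_neg: "le a b \<Longrightarrow> le (-b) (-a)"
  by (subst le_iff, subst (asm) le_iff) simp

lemma Ki_sub: "u \<in> Ki \<Longrightarrow> le 0 u"
  unfolding c_interior_def by blast

lemma Ki_open: "conv xs x \<Longrightarrow> x \<in> Ki \<Longrightarrow> \<forall>\<^sub>F n in sequentially. xs n \<in> Ki"
proof -
  assume a: "conv xs x" "x \<in> Ki"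
  then obtain U where U: "U \<subseteq> {x. le 0 x}" "c_open conv U" "x \<in> U"
    unfolding c_interior_def by blast
  then have "\<forall>\<^sub>F n in sequentially. xs n \<in> U" using a unfolding c_open_def by blast
  then show ?thesis by (rule eventually_mono) (use U in \<open>auto simp: c_interior_def\<close>)
qed

lemma open_sub: "U \<subseteq> {x. le 0 x} \<Longrightarrow> c_open conv U \<Longrightarrow> U \<subseteq> Ki"
  unfolding c_interior_def by blast

lemma Ki_ne: "Ki \<noteq> {}"
  using S unfolding solid_vector_space_def c_solid_cone_def by blast

lemma Ki_add: assumes "le 0 a" "u \<in> Ki" shows "a + u \<in> Ki"
proof -
  let ?U = "(\<lambda>u. a + u) ` Ki"
  have "c_open conv ?U"
    unfolding c_open_def
  proof (intro allI impI)
    fix xs y assume c: "conv xs y" and y: "y \<in> ?U"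
    then obtain v where v: "v \<in> Ki" "y = a + v" by blast
    have "conv (\<lambda>n. xs n - a) (y - a)" using Cdiff[OF c Cconst] .
    then have "\<forall>\<^sub>F n in sequentially. xs n - a \<in> Ki" using Ki_open v by simp
    then show "\<forall>\<^sub>F n in sequentially. xs n \<in> ?U"
      by (rule eventually_mono) (metis add.commute diff_add_cancel image_eqI)
  qed
  moreover have "?U \<subseteq> {x. le 0 x}" using K_add[OF assms(1)] Ki_sub by blast
  ultimately show ?thesis using open_sub assms by blast
qed

lemma Ki_scale: assumes "s > 0" "u \<in> Ki" shows "s *\<^sub>R u \<in> Ki"
proof -
  let ?U = "(\<lambda>u. s *\<^sub>R u) ` Ki"
  have "c_open conv ?U"
    unfolding c_open_def
  proof (intro allI impI)
    fix xs y assume c: "conv xs y" and y: "y \<in> ?U"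
    then obtain v where v: "v \<in> Ki" "y = s *\<^sub>R v" by blast
    have "conv (\<lambda>n. (1/s) *\<^sub>R xs n) ((1/s) *\<^sub>R y)" using C2[OF c] .
    then have "\<forall>\<^sub>F n in sequentially. (1/s) *\<^sub>R xs n \<in> Ki" using Ki_open v assms by simp
    then show "\<forall>\<^sub>F n in sequentially. xs n \<in> ?U"
    proof (rule eventually_mono)
      fix n assume "(1/s) *\<^sub>R xs n \<in> Ki"
      moreover have "xs n = s *\<^sub>R ((1/s) *\<^sub>R xs n)" using assms by simp
      ultimately show "xs n \<in> ?U" by blast
    qed
  qed
  moreover have "?U \<subseteq> {x. le 0 x}" using K_scale assms Ki_sub by auto
  ultimately show ?thesis using open_sub assms by blast
qed

lemma order_unit: assumes c: "c \<in> Ki" shows "\<exists>m>0. le (-(m *\<^sub>R c)) v \<and> le v (m *\<^sub>R c)"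
proof -
  have l: "(\<lambda>n. inverse (real (Suc n))) \<longlonglongrightarrow> 0" by (rule LIMSEQ_inverse_real_of_nat)
  have "conv (\<lambda>n. c + inverse (real (Suc n)) *\<^sub>R v) (c + 0 *\<^sub>R v)"
    using C1[OF Cconst C3[OF l]] .
  then have e1: "\<forall>\<^sub>F n in sequentially. c + inverse (real (Suc n)) *\<^sub>R v \<in> Ki"
    using Ki_open c by simp
  have "conv (\<lambda>n. c + inverse (real (Suc n)) *\<^sub>R (-v)) (c + 0 *\<^sub>R (-v))"
    using C1[OF Cconst C3[OF l]] .
  then have e2: "\<forall>\<^sub>F n in sequentially. c + inverse (real (Suc n)) *\<^sub>R (-v) \<in> Ki"
    using Ki_open c by simp
  obtain N where N: "\<forall>n\<ge>N. c + inverse (real (Suc n)) *\<^sub>R v \<in> Ki \<and> c + inverse (real (Suc n)) *\<^sub>R (-v) \<in> Ki"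
    using eventually_conj[OF e1 e2] unfolding eventually_sequentially by blast
  let ?m = "real (Suc N)"
  have a1: "le 0 (?m *\<^sub>R (c + inverse ?m *\<^sub>R v))"
    using N Ki_sub K_scale[of ?m] by auto
  have a2: "le 0 (?m *\<^sub>R (c + inverse ?m *\<^sub>R (-v)))"
    using N Ki_sub K_scale[of ?m] by auto
  have h: "?m *\<^sub>R (c + inverse ?m *\<^sub>R w) = ?m *\<^sub>R c + w" for w
    by (simp add: scaleR_add_right del: of_nat_Suc)
  have "?m *\<^sub>R (c + inverse ?m *\<^sub>R v) = v - (-(?m *\<^sub>R c))"
    using h[of v] by (simp add: add.commute)
  moreover have "?m *\<^sub>R (c + inverse ?m *\<^sub>R (-v)) = ?m *\<^sub>R c - v"
    using h[of "-v"] by simp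
  ultimately show ?thesis using a1 a2 le_iff
    by (metis of_nat_0_less_iff zero_less_Suc)
qed

lemma le_mono_scale: "le 0 c \<Longrightarrow> 0 \<le> s \<Longrightarrow> s \<le> t \<Longrightarrow> le (s *\<^sub>R c) (t *\<^sub>R c)"
  by (subst le_iff) (metis K_scale diff_ge_0_iff_ge scaleR_diff_left)

lemma interval_aux: assumes "c \<in> Ki" "le 0 (c + w)" "0 \<le> s" "s < 1"
  shows "c + s *\<^sub>R w \<in> Ki"
proof -
  have "c + s *\<^sub>R w = s *\<^sub>R (c + w) + (1 - s) *\<^sub>R c"
    by (simp add: algebra_simps)
  moreover have "(1 - s) *\<^sub>R c \<in> Ki" using Ki_scale assms by simp
  moreover have "le 0 (s *\<^sub>R (c + w))" using K_scale assms by simp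
  ultimately show ?thesis using Ki_add by simp
qed

lemma interval: assumes c: "c \<in> Ki" and v: "le (-c) v" "le v c" and t: "\<bar>t\<bar> < 1"
  shows "lt (-c) (t *\<^sub>R v) \<and> lt (t *\<^sub>R v) c"
proof -
  have p1: "le 0 (c + v)" using v(1) le_iff[of "-c" v] by (simp add: add.commute)
  have p2: "le 0 (c + (-v))" using v(2) le_iff[of v c] by simp
  have A: "c + \<bar>t\<bar> *\<^sub>R v \<in> Ki" "c + \<bar>t\<bar> *\<^sub>R (-v) \<in> Ki"
    using interval_aux[OF c p1, of "\<bar>t\<bar>"] interval_aux[OF c p2, of "\<bar>t\<bar>"] t by auto
  show ?thesis
  proof (cases "t \<ge> 0")
    case True
    then show ?thesis using A by (simp add: lt_iff add.commute)
  next
    case False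
    then have "\<bar>t\<bar> = -t" by simp
    then show ?thesis using A by (simp add: lt_iff add.commute)
  qed
qed

lemma lt_le: "lt a b \<Longrightarrow> le a b"
  using lt_iff Ki_sub le_iff by blast

lemma char_fwd:
  assumes c: "conv xs x" and l: "lt 0 e"
  shows "\<exists>N. \<forall>n>N. lt (x - e) (xs n) \<and> lt (xs n) (x + e)"
proof -
  have e: "e \<in> Ki" using l lt_iff by simp
  have "conv (\<lambda>n. xs n - (x - e)) (x - (x - e))" using Cdiff[OF c Cconst] .
  then have e1: "\<forall>\<^sub>F n in sequentially. xs n - (x - e) \<in> Ki" using Ki_open e by simp
  have "conv (\<lambda>n. (x + e) - xs n) ((x + e) - x)" using Cdiff[OF Cconst c] .
  then have e2: "\<forall>\<^sub>F n in sequentially. (x + e) - xs n \<in> Ki" using Ki_open e by simp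
  obtain N where "\<forall>n\<ge>N. xs n - (x - e) \<in> Ki \<and> (x + e) - xs n \<in> Ki"
    using eventually_conj[OF e1 e2] unfolding eventually_sequentially by blast
  then have "\<forall>n>N. lt (x - e) (xs n) \<and> lt (xs n) (x + e)" by (auto simp: lt_iff)
  then show ?thesis by blast
qed

lemma char_rev:
  assumes H: "\<forall>c. lt 0 c \<longrightarrow> (\<exists>N. \<forall>n>N. lt (x - c) (xs n) \<and> lt (xs n) (x + c))"
  shows "conv xs x"
proof -
  obtain e where e: "e \<in> Ki" using Ki_ne by blast
  have eK: "le 0 e" using e Ki_sub by blast
  define d where "d n = xs n - x" for n
  define S where "S n = {t::real. 0 \<le> t \<and> le (- (t *\<^sub>R e)) (d n) \<and> le (d n) (t *\<^sub>R e)}" for n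
  have Sne: "S n \<noteq> {}" for n
    using order_unit[OF e, of "d n"] unfolding S_def by force
  have Sbdd: "bdd_below (S n)" for n
    unfolding bdd_below_def S_def by auto
  have Sup: "t' \<in> S n" if "t \<in> S n" "t \<le> t'" for n t t'
  proof -
    have t: "0 \<le> t" "le (- (t *\<^sub>R e)) (d n)" "le (d n) (t *\<^sub>R e)" using that S_def by auto
    have m: "le (t *\<^sub>R e) (t' *\<^sub>R e)" using le_mono_scale[OF eK t(1) that(2)] .
    show ?thesis unfolding S_def using t that(2) le_trans[OF t(3) m] le_trans[OF le_neg[OF m] t(2)] by auto
  qed
  have Sge: "0 \<le> Inf (S n)" for n
    by (rule cInf_greatest[OF Sne]) (auto simp: S_def)
  define lam where "lam n = Inf (S n) + 1/(real n + 1)" for n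
  have lamS: "lam n \<in> S n" for n
  proof -
    have "Inf (S n) < lam n" unfolding lam_def by simp
    then obtain t where "t \<in> S n" "t < lam n" using cInf_less_iff[OF Sne Sbdd] by blast
    then show ?thesis using Sup by auto
  qed
  have lam0: "lam \<longlonglongrightarrow> 0"
    unfolding LIMSEQ_iff
  proof (intro allI impI)
    fix r :: real assume r: "r > 0"
    obtain k where k: "inverse (real (Suc k)) < r/2" using reals_Archimedean[of "r/2"] r by auto
    let ?i = "inverse (real (Suc k))"
    have "?i *\<^sub>R e \<in> Ki" using Ki_scale e by simp
    then have "lt 0 (?i *\<^sub>R e)" using lt_iff by simp
    then obtain N where N: "\<forall>n>N. lt (x - ?i *\<^sub>R e) (xs n) \<and> lt (xs n) (x + ?i *\<^sub>R e)" using H by blast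
    show "\<exists>no. \<forall>n\<ge>no. norm (lam n - 0) < r"
    proof (intro exI allI impI)
      fix n assume n: "max (Suc N) k \<le> n"
      then have "lt (x - ?i *\<^sub>R e) (xs n) \<and> lt (xs n) (x + ?i *\<^sub>R e)" using N by auto
      then have "le (x - ?i *\<^sub>R e) (xs n) \<and> le (xs n) (x + ?i *\<^sub>R e)" using lt_le by blast
      then have "le (- (?i *\<^sub>R e)) (d n) \<and> le (d n) (?i *\<^sub>R e)"
        unfolding d_def using le_iff[of "x - ?i *\<^sub>R e" "xs n"] le_iff[of "- (?i *\<^sub>R e)" "xs n - x"]
          le_iff[of "xs n" "x + ?i *\<^sub>R e"] le_iff[of "xs n - x" "?i *\<^sub>R e"]
        by (simp add: algebra_simps)
      then have "?i \<in> S n" unfolding S_def by simp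
      then have "Inf (S n) \<le> ?i" using cInf_lower[OF _ Sbdd] by blast
      moreover have "1/(real n + 1) \<le> ?i" using n
        by (simp add: divide_inverse frac_le inverse_le_imp_le)
      ultimately show "norm (lam n - 0) < r" using Sge[of n] k unfolding lam_def by simp
    qed
  qed
  have c1: "conv (\<lambda>n. - (lam n *\<^sub>R e)) 0"
    using C3[OF tendsto_minus[OF lam0], of e] by simp
  have c2: "conv (\<lambda>n. lam n *\<^sub>R e) 0"
    using C3[OF lam0, of e] by simp
  have b: "le (-(lam n *\<^sub>R e)) (d n) \<and> le (d n) (lam n *\<^sub>R e)" for n
    using lamS[of n] unfolding S_def by blast
  have "conv d 0"
    using Nrm[unfolded c_normal_def, rule_format, OF b c1 c2] .
  then have "conv (\<lambda>n. d n + x) (0 + x)" using C1[OF _ Cconst] by blast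
  then show ?thesis unfolding d_def by simp
qed

lemma char: "conv xs x \<longleftrightarrow> (\<forall>c. lt 0 c \<longrightarrow> (\<exists>N. \<forall>n>N. lt (x - c) (xs n) \<and> lt (xs n) (x + c)))"
  using char_fwd char_rev by blast

lemma C8: assumes c: "conv xs x" and r: "strict_mono r" shows "conv (xs \<circ> r) x"
  unfolding char
proof (intro allI impI)
  fix e assume "lt 0 e"
  then obtain N where N: "\<forall>n>N. lt (x - e) (xs n) \<and> lt (xs n) (x + e)" using c char by blast
  have "\<forall>n>N. lt (x - e) ((xs \<circ> r) n) \<and> lt ((xs \<circ> r) n) (x + e)"
    using N seq_suble[OF r] by (metis comp_apply order.strict_trans2)
  then show "\<exists>N. \<forall>n>N. lt (x - e) ((xs \<circ> r) n) \<and> lt ((xs \<circ> r) n) (x + e)" by blast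
qed

lemma C9: assumes ev: "\<forall>\<^sub>F n in sequentially. xs n = ys n" and c: "conv xs x" shows "conv ys x"
  unfolding char
proof (intro allI impI)
  fix e assume "lt 0 e"
  then obtain N where N: "\<forall>n>N. lt (x - e) (xs n) \<and> lt (xs n) (x + e)" using c char by blast
  obtain M where M: "\<forall>n\<ge>M. xs n = ys n" using ev unfolding eventually_sequentially by blast
  have "\<forall>n>max N M. lt (x - e) (ys n) \<and> lt (ys n) (x + e)" using N M by auto
  then show "\<exists>N. \<forall>n>N. lt (x - e) (ys n) \<and> lt (ys n) (x + e)" by blast
qed

lemma C12: assumes b: "Bseq cs" and c: "conv xs 0" shows "conv (\<lambda>n. cs n *\<^sub>R xs n) 0"
proof -
  obtain M where M: "M > 0" "\<forall>n. norm (cs n) \<le> M" using b by (rule BseqE) blast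
  show ?thesis unfolding char
  proof (intro allI impI)
    fix e assume "lt 0 e"
    then have e: "e \<in> Ki" using lt_iff by simp
    let ?s = "M + 1"
    have "inverse ?s *\<^sub>R e \<in> Ki" using Ki_scale e M by simp
    then have "lt 0 (inverse ?s *\<^sub>R e)" using lt_iff by simp
    then obtain N where N: "\<forall>n>N. lt (0 - inverse ?s *\<^sub>R e) (xs n) \<and> lt (xs n) (0 + inverse ?s *\<^sub>R e)"
      using c char by blast
    have "lt (0 - e) (cs n *\<^sub>R xs n) \<and> lt (cs n *\<^sub>R xs n) (0 + e)" if n: "n > N" for n
    proof -
      have l: "le (- (inverse ?s *\<^sub>R e)) (xs n)" "le (xs n) (inverse ?s *\<^sub>R e)"
        using N n lt_le by auto
      have l2: "le (- e) (?s *\<^sub>R xs n)" "le (?s *\<^sub>R xs n) e"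
        using le_scale[OF _ l(1), of ?s] le_scale[OF _ l(2), of ?s] M by auto
      have a: "\<bar>cs n\<bar> < ?s" using M(2)[rule_format, of n] by simp
      have t: "\<bar>cs n / ?s\<bar> < 1" using a M(1) by simp
      have eq: "(cs n / ?s) *\<^sub>R (?s *\<^sub>R xs n) = cs n *\<^sub>R xs n" using M by simp
      show ?thesis using interval[OF e l2 t] unfolding eq by simp
    qed
    then show "\<exists>N. \<forall>n>N. lt (0 - e) (cs n *\<^sub>R xs n) \<and> lt (cs n *\<^sub>R xs n) (0 + e)" by blast
  qed
qed

lemma C11: assumes l: "cs \<longlonglongrightarrow> 0" and ab: "\<forall>n. le a (xs n) \<and> le (xs n) b"
  shows "conv (\<lambda>n. cs n *\<^sub>R xs n) 0"
  unfolding char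
proof (intro allI impI)
  fix e assume "lt 0 e"
  then have e: "e \<in> Ki" using lt_iff by simp
  have eK: "le 0 e" using e Ki_sub by blast
  obtain m1 where m1: "m1 > 0" "le (-(m1 *\<^sub>R e)) a" using order_unit[OF e, of a] by blast
  obtain m2 where m2: "m2 > 0" "le b (m2 *\<^sub>R e)" using order_unit[OF e, of b] by blast
  define m where "m = max m1 m2"
  have mp: "m > 0" using m1 unfolding m_def by simp
  have A: "le (-(m *\<^sub>R e)) a"
    using le_trans[OF le_neg[OF le_mono_scale[OF eK _ max.cobounded1[of m1 m2]]] m1(2)] m1 unfolding m_def by simp
  have B: "le b (m *\<^sub>R e)"
    using le_trans[OF m2(2) le_mono_scale[OF eK _ max.cobounded2[of m2 m1]]] m2 unfolding m_def
    by (simp add: max.commute)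
  have "(\<lambda>n. cs n * m) \<longlonglongrightarrow> 0 * m" using tendsto_mult[OF l tendsto_const] .
  then obtain N where N: "\<forall>n\<ge>N. norm (cs n * m - 0) < 1" unfolding LIMSEQ_iff by force
  then have N: "\<forall>n\<ge>N. \<bar>cs n * m\<bar> < 1" by simp
  have "lt (0 - e) (cs n *\<^sub>R xs n) \<and> lt (cs n *\<^sub>R xs n) (0 + e)" if n: "n > N" for n
  proof -
    have x: "le (-(m *\<^sub>R e)) (xs n)" "le (xs n) (m *\<^sub>R e)"
      using le_trans[OF A] le_trans[OF _ B] ab by blast+
    have l2: "le (- e) (inverse m *\<^sub>R xs n)" "le (inverse m *\<^sub>R xs n) e"
      using le_scale[OF _ x(1), of "inverse m"] le_scale[OF _ x(2), of "inverse m"] mp by auto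
    have t: "\<bar>cs n * m\<bar> < 1" using N n by auto
    have eq: "(cs n * m) *\<^sub>R (inverse m *\<^sub>R xs n) = cs n *\<^sub>R xs n" using mp by simp
    show ?thesis using interval[OF e l2 t] unfolding eq by simp
  qed
  then show "\<exists>N. \<forall>n>N. lt (0 - e) (cs n *\<^sub>R xs n) \<and> lt (cs n *\<^sub>R xs n) (0 + e)" by blast
qed

lemma C10: assumes l: "cs \<longlonglongrightarrow> c" and cx: "conv xs x"
  shows "conv (\<lambda>n. cs n *\<^sub>R xs n) (c *\<^sub>R x)"
proof -
  have b: "Bseq cs" using l convergent_imp_Bseq convergentI by blast
  have 0: "conv (\<lambda>n. xs n - x) 0" using Cdiff[OF cx Cconst[of x]] by simp
  have 1: "conv (\<lambda>n. cs n *\<^sub>R (xs n - x)) 0" using C12[OF b 0] .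
  have "(\<lambda>n. cs n - c) \<longlonglongrightarrow> c - c" using tendsto_diff[OF l tendsto_const] .
  then have 2: "conv (\<lambda>n. (cs n - c) *\<^sub>R x) 0" using C3[of "\<lambda>n. cs n - c" 0 x] by simp
  have "conv (\<lambda>n. (cs n *\<^sub>R (xs n - x) + (cs n - c) *\<^sub>R x) + c *\<^sub>R x) ((0 + 0) + c *\<^sub>R x)"
    using C1[OF C1[OF 1 2] Cconst] .
  moreover have "(\<lambda>n. (cs n *\<^sub>R (xs n - x) + (cs n - c) *\<^sub>R x) + c *\<^sub>R x) = (\<lambda>n. cs n *\<^sub>R xs n)"
    by (simp add: algebra_simps)
  ultimately show ?thesis by simp
qed

end

theorem theorem7p10:
  fixes conv :: "(nat \<Rightarrow> 'a::real_vector) \<Rightarrow> 'a \<Rightarrow> bool"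
    and le lt :: "'a \<Rightarrow> 'a \<Rightarrow> bool"
  assumes "solid_vector_space conv le lt"
    and "c_normal conv le"
  shows
    "(\<forall>xs x r. conv xs x \<longrightarrow> strict_mono r \<longrightarrow> conv (xs \<circ> r) x)
     \<and> (\<forall>xs ys x. (\<forall>\<^sub>F n in sequentially. xs n = ys n) \<longrightarrow> (conv xs x \<longleftrightarrow> conv ys x))
     \<and> (\<forall>(cs::nat \<Rightarrow> real) c xs x. cs \<longlonglongrightarrow> c \<longrightarrow> conv xs x \<longrightarrow>
           conv (\<lambda>n. cs n *\<^sub>R xs n) (c *\<^sub>R x))
     \<and> (\<forall>(cs::nat \<Rightarrow> real) xs. cs \<longlonglongrightarrow> 0 \<longrightarrow> (\<exists>a b. \<forall>n. le a (xs n) \<and> le (xs n) b) \<longrightarrow>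
           conv (\<lambda>n. cs n *\<^sub>R xs n) 0)
     \<and> (\<forall>(cs::nat \<Rightarrow> real) xs. Bseq cs \<longrightarrow> conv xs 0 \<longrightarrow> conv (\<lambda>n. cs n *\<^sub>R xs n) 0)
     \<and> (\<forall>xs x. conv xs x \<longleftrightarrow>
           (\<forall>c. lt 0 c \<longrightarrow> (\<exists>N. \<forall>n>N. lt (x - c) (xs n) \<and> lt (xs n) (x + c))))"
proof -
  interpret svs conv le lt using assms by unfold_locales
  have C9': "(\<forall>\<^sub>F n in sequentially. xs n = ys n) \<longrightarrow> (conv xs x \<longleftrightarrow> conv ys x)" for xs ys x
  proof
    assume ev: "\<forall>\<^sub>F n in sequentially. xs n = ys n"
    then have "\<forall>\<^sub>F n in sequentially. ys n = xs n" by (rule eventually_mono) simp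
    then show "conv xs x \<longleftrightarrow> conv ys x" using C9 ev by blast
  qed
  have P1: "\<forall>xs x r. conv xs x \<longrightarrow> strict_mono r \<longrightarrow> conv (xs \<circ> r) x" using C8 by blast
  have P2: "\<forall>xs ys x. (\<forall>\<^sub>F n in sequentially. xs n = ys n) \<longrightarrow> (conv xs x \<longleftrightarrow> conv ys x)" using C9' by blast
  have P3: "\<forall>(cs::nat \<Rightarrow> real) c xs x. cs \<longlonglongrightarrow> c \<longrightarrow> conv xs x \<longrightarrow> conv (\<lambda>n. cs n *\<^sub>R xs n) (c *\<^sub>R x)"
    using C10 by blast
  have P4: "\<forall>(cs::nat \<Rightarrow> real) xs. cs \<longlonglongrightarrow> 0 \<longrightarrow> (\<exists>a b. \<forall>n. le a (xs n) \<and> le (xs n) b) \<longrightarrow>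
           conv (\<lambda>n. cs n *\<^sub>R xs n) 0" using C11 by blast
  have P5: "\<forall>(cs::nat \<Rightarrow> real) xs. Bseq cs \<longrightarrow> conv xs 0 \<longrightarrow> conv (\<lambda>n. cs n *\<^sub>R xs n) 0"
    using C12 by blast
  have P6: "\<forall>xs x. conv xs x \<longleftrightarrow> (\<forall>c. lt 0 c \<longrightarrow> (\<exists>N. \<forall>n>N. lt (x - c) (xs n) \<and> lt (xs n) (x + c)))"
    using char by blast
  show ?thesis by (intro conjI) (fact P1 P2 P3 P4 P5 P6)+
qed

end
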